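(* Let $p$ be a prime, $d \geq 1$, $V = \mathbb{F}_p^d$, and let $G \leq \mathrm{GL}(V)$ be an irreducible linear group on $V$. Then $\overrightarrow{\mathrm{diam}}(V, G) \leq d(p-1)$.
   Context: Vectors are row vectors and $G$ acts on $V$ by right multiplication. For a subset $\Delta \subseteq V$ and a positive integer $m$, $m \cdot \Delta$ denotes the $m$-fold sumset $\{\delta_1 + \dots + \delta_m \mid \delta_i \in \Delta\}$. $\overrightarrow{\mathrm{diam}}(V, G)$ denotes the maximum of the directed diameters of the nondiagonal orbital graphs of the affine permutation group $VG = \{ v \mapsto b + vA \mid b \in V, A \in G\}$ on $V$, i.e. of the Cayley digraphs on $V$ with connection set a nonzero $G$-orbit $\mathcal{O}$ (arcs $u \to u + w$, $w \in \mathcal{O}$); equivalently, it is the least positive integer $m$ such that $m \cdot (\mathcal{O} \cup \{0\}) = V$ for every nonzero orbit $\mathcal{O}$ of $G$ on $V$. *)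

theory Defs
  imports "HOL-Analysis.Analysis"
begin

text \<open>Row vectors in 'k^'n; a matrix A :: 'k^'n^'n acts by right multiplication v v* A.\<close>

definition matrix_group :: "('k::field ^'n^'n) set \<Rightarrow> bool" where
  "matrix_group G \<longleftrightarrow> (\<forall>A\<in>G. invertible A) \<and> mat 1 \<in> G \<and>
     (\<forall>A\<in>G. \<forall>B\<in>G. A ** B \<in> G) \<and> (\<forall>A\<in>G. matrix_inv A \<in> G)"

definition irreducible_group :: "('k::field ^'n^'n) set \<Rightarrow> bool" where
  "irreducible_group G \<longleftrightarrow>
     (\<forall>W :: ('k^'n) set. vec.subspace W \<and> (\<forall>w\<in>W. \<forall>A\<in>G. w v* A \<in> W)
        \<longrightarrow> W = {0} \<or> W = UNIV)"

definition orbit :: "('k::field ^'n^'n) set \<Rightarrow> 'k^'n \<Rightarrow> ('k^'n) set" where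
  "orbit G v = {v v* A | A. A \<in> G}"

fun sumset :: "nat \<Rightarrow> 'a::comm_monoid_add set \<Rightarrow> 'a set" where
  "sumset 0 D = {0}"
| "sumset (Suc m) D = {x + y | x y. x \<in> D \<and> y \<in> sumset m D}"

definition ddiam :: "('k::field ^'n^'n) set \<Rightarrow> nat" where
  "ddiam G = (LEAST m. 0 < m \<and>
     (\<forall>v::'k^'n. v \<noteq> 0 \<longrightarrow> sumset m (orbit G v \<union> {0}) = UNIV))"

end

theory Submission
  imports Defs "HOL-Number_Theory.Number_Theory"
begin

lemma zero_in_sumset: "(0::'a::comm_monoid_add) \<in> sumset n D" if "0 \<in> D"
  using that by (induction n) force+

lemma sumset_add:
  fixes x y :: "'a::comm_monoid_add"
  shows "x \<in> sumset a D \<Longrightarrow> y \<in> sumset b D \<Longrightarrow> x + y \<in> sumset (a+b) D"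
proof (induction a arbitrary: x)
  case 0
  then show ?case by simp
next
  case (Suc a)
  then obtain u w where "x = u + w" "u \<in> D" "w \<in> sumset a D" by auto
  with Suc have "w + y \<in> sumset (a+b) D" by blast
  then show ?case using \<open>x = u + w\<close> \<open>u \<in> D\<close> by (auto simp: add.assoc)
qed

lemma sumset_mono:
  fixes D :: "'a::comm_monoid_add set"
  assumes "0 \<in> D" "a \<le> b" "x \<in> sumset a D"
  shows "x \<in> sumset b D"
proof -
  have "x + 0 \<in> sumset (a + (b-a)) D"
    by (rule sumset_add[OF assms(3) zero_in_sumset[OF assms(1)]])
  then show ?thesis using assms(2) by simp
qed

lemma sumset_scale:
  fixes b :: "'k::field ^'n"
  assumes "b \<in> D"
  shows "of_nat n *s b \<in> sumset n D"
proof (induction n)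
  case 0
  then show ?case by simp
next
  case (Suc n)
  have "of_nat (Suc n) *s b = b + of_nat n *s b"
    by (simp add: vector_sadd_rdistrib)
  then show ?case using Suc assms by auto
qed

lemma sumset_sum:
  fixes f :: "'b \<Rightarrow> 'a::comm_monoid_add"
  assumes "finite B" "\<forall>b\<in>B. f b \<in> sumset (g b) D"
  shows "sum f B \<in> sumset (sum g B) D"
  using assms
proof (induction B rule: finite_induct)
  case empty
  then show ?case by simp
next
  case (insert x F)
  then show ?case using sumset_add[of "f x" "g x" D "sum f F" "sum g F"] by simp
qed

lemma field_digits:
  assumes "prime CARD('k::{field,finite})"
  shows "\<exists>n < CARD('k). (c::'k) = of_nat n"
proof -
  have "CHAR('k) dvd CARD('k)" by (rule CHAR_dvd_CARD)
  moreover have "CHAR('k) \<noteq> 1" by simp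
  ultimately have ch: "CHAR('k) = CARD('k)" using assms
    by (meson prime_nat_iff)
  have inj: "inj_on (of_nat :: nat \<Rightarrow> 'k) {..<CARD('k)}"
  proof (rule inj_onI)
    fix x y assume "x \<in> {..<CARD('k)}" "y \<in> {..<CARD('k)}" "(of_nat x::'k) = of_nat y"
    then show "x = y" using of_nat_eq_iff_cong_CHAR[of x y] ch
      by (auto simp: cong_def)
  qed
  have "card ((of_nat :: nat \<Rightarrow> 'k) ` {..<CARD('k)}) = CARD('k)"
    using card_image[OF inj] by simp
  then have "(of_nat :: nat \<Rightarrow> 'k) ` {..<CARD('k)} = UNIV"
    by (simp add: card_subset_eq)
  then show ?thesis by (metis UNIV_I imageE lessThan_iff)
qed

lemma vm_scale: "(c *s x) v* A = c *s (x v* (A::'k::field^'n^'n))"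
  by (simp add: vector_matrix_mult_def vec_eq_iff sum_distrib_left algebra_simps)

lemma vm_add: "(x + y) v* A = x v* A + y v* (A::'k::field^'n^'n)"
  by (simp add: vector_matrix_mult_def vec_eq_iff sum.distrib algebra_simps)

theorem corollary2p2:
  fixes G :: "('k::{field,finite} ^'n^'n) set"
  assumes "prime CARD('k)"
    and "matrix_group G"
    and "irreducible_group G"
  shows "ddiam G \<le> CARD('n) * (CARD('k) - 1)"
proof -
  let ?p = "CARD('k)" and ?d = "CARD('n)"
  have p2: "?p \<ge> 2" using assms(1) prime_ge_2_nat by blast
  have pos: "0 < ?d * (?p - 1)" using p2 by simp
  have main: "sumset (?d * (?p - 1)) (orbit G v \<union> {0}) = UNIV" if "v \<noteq> 0" for v :: "'k^'n"
  proof -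
    let ?O = "orbit G v"
    let ?D = "?O \<union> {0}"
    have vO: "v \<in> ?O" using assms(2) unfolding matrix_group_def orbit_def
      by (metis (mono_tags, lifting) mem_Collect_eq vector_matrix_mul_rid)
    have inv: "x v* A \<in> vec.span ?O" if "x \<in> vec.span ?O" "A \<in> G" for x A
      using that(1)
    proof (induction rule: vec.span_induct)
      case base
      show ?case unfolding vec.subspace_def
        by (auto simp: vm_add vm_scale intro: vec.span_add vec.span_scale vec.span_zero)
    next
      case (step x)
      then obtain B where "B \<in> G" "x = v v* B" unfolding orbit_def by auto
      then have "x v* A = v v* (B ** A)" by (simp add: vector_matrix_mul_assoc)
      moreover have "B ** A \<in> G" using assms(2) \<open>B \<in> G\<close> \<open>A \<in> G\<close> unfolding matrix_group_def by auto
      ultimately have "x v* A \<in> ?O" unfolding orbit_def by auto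
      then show ?case by (rule vec.span_base)
    qed
    have "vec.span ?O = {0} \<or> vec.span ?O = UNIV"
      using assms(3) inv vec.subspace_span unfolding irreducible_group_def by blast
    then have spanU: "vec.span ?O = UNIV" using vO that vec.span_base by blast
    obtain B where B: "B \<subseteq> ?O" "vec.independent B" "?O \<subseteq> vec.span B"
      using vec.maximal_independent_subset by blast
    have finB: "finite B" using B(2) vec.finiteI_independent by blast
    have cardB: "card B \<le> ?d"
      using vec.independent_card_le_dim[of B UNIV] B(2) vec_dim_card[where 'a='k and 'n='n] by auto
    have spanB: "vec.span B = UNIV"
      using spanU B(3) vec.span_minimal[of ?O "vec.span B"] vec.subspace_span
      by (metis top.extremum_uniqueI)
    show ?thesis
    proof (rule sym, rule UNIV_eq_I)
      fix x :: "'k^'n"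
      have "x \<in> vec.span B" using spanB by simp
      then obtain u where x: "x = (\<Sum>b\<in>B. u b *s b)"
        using vec.span_finite[OF finB] by auto
      define nb where "nb b = (SOME n. n < ?p \<and> u b = of_nat n)" for b
      have nb: "nb b < ?p \<and> u b = of_nat (nb b)" for b
        unfolding nb_def using someI_ex[OF field_digits[OF assms(1), of "u b"]] by blast
      have "x = (\<Sum>b\<in>B. of_nat (nb b) *s b)" using x nb by simp
      moreover have "(\<Sum>b\<in>B. of_nat (nb b) *s b) \<in> sumset (\<Sum>b\<in>B. nb b) ?D"
        by (rule sumset_sum[OF finB]) (use B(1) sumset_scale in blast)
      moreover have "(\<Sum>b\<in>B. nb b) \<le> ?d * (?p - 1)"
      proof -
        have "(\<Sum>b\<in>B. nb b) \<le> (\<Sum>b\<in>B. ?p - 1)"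
          by (rule sum_mono) (metis nb Suc_pred' less_Suc_eq_le zero_less_iff_neq_zero not_less0)
        also have "\<dots> = card B * (?p - 1)" by simp
        also have "\<dots> \<le> ?d * (?p - 1)" using cardB by simp
        finally show ?thesis .
      qed
      ultimately show "x \<in> sumset (?d * (?p - 1)) ?D"
        using sumset_mono[of ?D] by blast
    qed
  qed
  show ?thesis unfolding ddiam_def
    by (rule Least_le) (use pos main in blast)
qed

end
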